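(* Let $h\ge1$ and let $\{S(t):t\geq 0\}$ be an $\mathbb{R}^h$-valued Lévy process such that $\kappa_S(\theta):=\log\mathbb{E}\left[e^{\langle\theta,S(1)\rangle}\right]$ is finite for all $\theta$ in a neighborhood of the origin. Let $\{V(t):t\geq0\}$ be a subordinator, independent of $\{S(t)\}$, such that $\kappa_V(\eta):=\log\mathbb{E}[e^{\eta V(1)}]$ is finite for $\eta$ in a neighborhood of $0\in\mathbb{R}$ and $\kappa_V'(0)>0$. Then $S\left(\frac{V(t)}{t}\right)$ converges weakly to $S(\kappa_V'(0))$ as $t\to\infty$; more precisely, $$\lim_{t\to\infty}\mathbb{E}\left[e^{\langle\theta,S\left(\frac{V(t)}{t}\right)\rangle}\right]=\mathbb{E}\left[e^{\langle\theta,S(\kappa_V'(0))\rangle}\right]=e^{\kappa_V'(0)\kappa_S(\theta)}\quad\text{for all }\theta\in\mathbb{R}^h.$$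
   Context: $\langle\cdot,\cdot\rangle$ is the Euclidean inner product on $\mathbb{R}^h$; the equalities are understood in $[0,+\infty]$ (with $e^{+\infty}=+\infty$). *)

theory Defs
  imports "HOL-Probability.Probability"
begin

definition levy_process :: "'a measure \<Rightarrow> (real \<Rightarrow> 'a \<Rightarrow> 'b::euclidean_space) \<Rightarrow> bool" where
  "levy_process M X \<longleftrightarrow> prob_space M
    \<and> (\<forall>t\<ge>0. X t \<in> borel_measurable M)
    \<and> (AE \<omega> in M. X 0 \<omega> = 0)
    \<and> (\<forall>(n::nat) (t::nat \<Rightarrow> real). 0 \<le> t 0 \<and> (\<forall>i<n. t i < t (Suc i)) \<longrightarrow>
          prob_space.indep_vars M (\<lambda>_. borel) (\<lambda>i \<omega>. X (t (Suc i)) \<omega> - X (t i) \<omega>) {..<n})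
    \<and> (\<forall>s t. 0 \<le> s \<and> s \<le> t \<longrightarrow>
          distr M borel (\<lambda>\<omega>. X t \<omega> - X s \<omega>) = distr M borel (X (t - s)))
    \<and> (\<forall>t\<ge>0. \<forall>e>0. ((\<lambda>s. measure M {\<omega>\<in>space M. e < dist (X s \<omega>) (X t \<omega>)}) \<longlongrightarrow> 0)
          (at t within {0..}))
    \<and> (AE \<omega> in M. \<forall>t\<ge>0. continuous (at_right t) (\<lambda>s. X s \<omega>) \<and>
          (0 < t \<longrightarrow> (\<exists>l. ((\<lambda>s. X s \<omega>) \<longlongrightarrow> l) (at_left t))))"

definition subordinator :: "'a measure \<Rightarrow> (real \<Rightarrow> 'a \<Rightarrow> real) \<Rightarrow> bool" where
  "subordinator M V \<longleftrightarrow> levy_process M V \<and> (AE \<omega> in M. mono_on {0..} (\<lambda>t. V t \<omega>))"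

definition process_sigma :: "'a measure \<Rightarrow> (real \<Rightarrow> 'a \<Rightarrow> 'b::topological_space) \<Rightarrow> 'a set set" where
  "process_sigma M X = sigma_sets (space M) (\<Union>t\<in>{0..}. {X t -` A \<inter> space M | A. A \<in> sets borel})"

fun ennexp :: "ereal \<Rightarrow> ennreal" where
  "ennexp (ereal x) = ennreal (exp x)"
| "ennexp PInfty = \<infinity>"
| "ennexp MInfty = 0"

definition ennln :: "ennreal \<Rightarrow> ereal" where
  "ennln x = (if x = \<infinity> then \<infinity> else if x = 0 then -\<infinity> else ereal (ln (enn2real x)))"

end

theory Submission
  imports Defs
begin
lemma (in prob_space) indep_nn_integral_pair:
  assumes rvX[measurable]: "random_variable S X" and rvY[measurable]: "random_variable T Y"
    and ind: "\<And>A B. A \<in> sets S \<Longrightarrow> B \<in> sets T \<Longrightarrow>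
       prob ((X -` A \<inter> space M) \<inter> (Y -` B \<inter> space M)) = prob (X -` A \<inter> space M) * prob (Y -` B \<inter> space M)"
    and h[measurable]: "h \<in> borel_measurable (S \<Otimes>\<^sub>M T)"
  shows "(\<integral>\<^sup>+\<omega>. h (X \<omega>, Y \<omega>) \<partial>M) = (\<integral>\<^sup>+y. \<integral>\<^sup>+x. h (x,y) \<partial>distr M S X \<partial>distr M T Y)"
proof -
  interpret XX: prob_space "distr M S X" by (rule prob_space_distr) fact
  interpret YY: prob_space "distr M T Y" by (rule prob_space_distr) fact
  interpret XY: pair_prob_space "distr M S X" "distr M T Y" ..
  have XYm[measurable]: "(\<lambda>x. (X x, Y x)) \<in> measurable M (S \<Otimes>\<^sub>M T)"
    using rvX rvY by (rule measurable_Pair)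
  have eq: "distr M S X \<Otimes>\<^sub>M distr M T Y = distr M (S \<Otimes>\<^sub>M T) (\<lambda>x. (X x, Y x))"
  proof (rule pair_measure_eqI)
    show "sigma_finite_measure (distr M S X)" ..
    show "sigma_finite_measure (distr M T Y)" ..
    fix A B assume A: "A \<in> sets (distr M S X)" and B: "B \<in> sets (distr M T Y)"
    have "emeasure (distr M (S \<Otimes>\<^sub>M T) (\<lambda>x. (X x, Y x))) (A \<times> B) = emeasure M ((\<lambda>x. (X x, Y x)) -` (A \<times> B) \<inter> space M)"
      using A B by (intro emeasure_distr[OF XYm]) auto
    also have "(\<lambda>x. (X x, Y x)) -` (A \<times> B) \<inter> space M = (X -` A \<inter> space M) \<inter> (Y -` B \<inter> space M)" by auto
    also have "emeasure M \<dots> = emeasure M (X -` A \<inter> space M) * emeasure M (Y -` B \<inter> space M)"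
      using ind[of A B] A B
      by (simp add: emeasure_eq_measure measure_nonneg ennreal_mult)
    also have "\<dots> = emeasure (distr M S X) A * emeasure (distr M T Y) B"
      using A B by (simp add: emeasure_distr)
    finally show "emeasure (distr M S X) A * emeasure (distr M T Y) B = emeasure (distr M (S \<Otimes>\<^sub>M T) (\<lambda>x. (X x, Y x))) (A \<times> B)" by simp
  qed simp
  have "(\<integral>\<^sup>+\<omega>. h (X \<omega>, Y \<omega>) \<partial>M) = (\<integral>\<^sup>+z. h z \<partial>distr M (S \<Otimes>\<^sub>M T) (\<lambda>x. (X x, Y x)))"
    by (subst nn_integral_distr) auto
  also have "\<dots> = (\<integral>\<^sup>+z. h z \<partial>(distr M S X \<Otimes>\<^sub>M distr M T Y))"
    by (simp add: eq)
  also have "\<dots> = (\<integral>\<^sup>+y. \<integral>\<^sup>+x. h (x,y) \<partial>distr M S X \<partial>distr M T Y)"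
    by (rule XY.nn_integral_snd[symmetric]) simp
  finally show ?thesis .
qed

lemma levy_facts:
  assumes "levy_process M X"
  shows "prob_space M" "\<And>t. t \<ge> 0 \<Longrightarrow> X t \<in> borel_measurable M"
    "AE \<omega> in M. X 0 \<omega> = 0"
    "\<And>n t. 0 \<le> t 0 \<Longrightarrow> (\<forall>i<n. t i < t (Suc i)) \<Longrightarrow>
          prob_space.indep_vars M (\<lambda>_. borel) (\<lambda>i \<omega>. X (t (Suc i)) \<omega> - X (t i) \<omega>) {..<n}"
    "\<And>s t. 0 \<le> s \<Longrightarrow> s \<le> t \<Longrightarrow> distr M borel (\<lambda>\<omega>. X t \<omega> - X s \<omega>) = distr M borel (X (t - s))"
    "AE \<omega> in M. \<forall>t\<ge>0. continuous (at_right t) (\<lambda>s. X s \<omega>)"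
  using assms unfolding levy_process_def by auto

lemma levy_mgf0:
  assumes "levy_process M X"
  shows "(\<integral>\<^sup>+\<omega>. ennreal (exp (\<theta> \<bullet> X 0 \<omega>)) \<partial>M) = 1"
proof -
  interpret prob_space M using levy_facts[OF assms] by simp
  have "(\<integral>\<^sup>+\<omega>. ennreal (exp (\<theta> \<bullet> X 0 \<omega>)) \<partial>M) = (\<integral>\<^sup>+\<omega>. 1 \<partial>M)"
    using levy_facts(3)[OF assms] by (intro nn_integral_cong_AE) auto
  then show ?thesis by (simp add: emeasure_space_1)
qed

lemma levy_mgf_add:
  assumes L: "levy_process M X" and st: "0 \<le> s" "0 \<le> t"
  shows "(\<integral>\<^sup>+\<omega>. ennreal (exp (\<theta> \<bullet> X (s+t) \<omega>)) \<partial>M) =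
     (\<integral>\<^sup>+\<omega>. ennreal (exp (\<theta> \<bullet> X s \<omega>)) \<partial>M) * (\<integral>\<^sup>+\<omega>. ennreal (exp (\<theta> \<bullet> X t \<omega>)) \<partial>M)"
proof -
  interpret prob_space M using levy_facts[OF L] by simp
  consider "s = 0" | "t = 0" | "s > 0" "t > 0" using st by linarith
  then show ?thesis
  proof cases
    case 1 then show ?thesis using levy_mgf0[OF L] by simp
  next
    case 2 then show ?thesis using levy_mgf0[OF L] by simp
  next
    case 3
    define \<tau> :: "nat \<Rightarrow> real" where "\<tau> i = (if i = 0 then 0 else if i = 1 then s else s + t)" for i
    have \<tau>: "\<tau> 0 = 0" "\<tau> 1 = s" "\<tau> 2 = s + t" by (auto simp: \<tau>_def)
    have ind: "indep_vars (\<lambda>_. borel) (\<lambda>i \<omega>. X (\<tau> (Suc i)) \<omega> - X (\<tau> i) \<omega>) {..<2}"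
      using levy_facts(4)[OF L, of \<tau> 2] 3 by (auto simp: \<tau>_def less_2_cases_iff)
    have ind2: "indep_vars (\<lambda>_. borel) (\<lambda>i \<omega>. ennreal (exp (\<theta> \<bullet> (X (\<tau> (Suc i)) \<omega> - X (\<tau> i) \<omega>)))) {..<2}"
      by (rule indep_vars_compose2[OF ind, where Y="\<lambda>_ x. ennreal (exp (\<theta> \<bullet> x))"]) auto
    have meas: "X u \<in> borel_measurable M" if "u \<ge> 0" for u using levy_facts(2)[OF L] that by auto
    have "(\<integral>\<^sup>+\<omega>. ennreal (exp (\<theta> \<bullet> X (s+t) \<omega>)) \<partial>M) =
        (\<integral>\<^sup>+\<omega>. (\<Prod>i\<in>{..<2}. ennreal (exp (\<theta> \<bullet> (X (\<tau> (Suc i)) \<omega> - X (\<tau> i) \<omega>)))) \<partial>M)"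
    proof (intro nn_integral_cong_AE)
      show "AE \<omega> in M. ennreal (exp (\<theta> \<bullet> X (s+t) \<omega>)) = (\<Prod>i\<in>{..<2}. ennreal (exp (\<theta> \<bullet> (X (\<tau> (Suc i)) \<omega> - X (\<tau> i) \<omega>))))"
        using levy_facts(3)[OF L]
      proof eventually_elim
        case (elim \<omega>)
        have "\<theta> \<bullet> X (s+t) \<omega> = \<theta> \<bullet> (X s \<omega> - X 0 \<omega>) + \<theta> \<bullet> (X (s+t) \<omega> - X s \<omega>)"
          using elim by (simp add: inner_diff_right)
        then show ?case
          by (simp add: lessThan_nat_numeral \<tau> exp_add ennreal_mult[symmetric] numeral_2_eq_2 \<tau>_def)
      qed
    qed
    also have "\<dots> = (\<Prod>i\<in>{..<2}. \<integral>\<^sup>+\<omega>. ennreal (exp (\<theta> \<bullet> (X (\<tau> (Suc i)) \<omega> - X (\<tau> i) \<omega>))) \<partial>M)"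
      by (rule indep_vars_nn_integral[OF _ ind2]) auto
    also have "\<dots> = (\<integral>\<^sup>+\<omega>. ennreal (exp (\<theta> \<bullet> (X s \<omega> - X 0 \<omega>))) \<partial>M) *
                    (\<integral>\<^sup>+\<omega>. ennreal (exp (\<theta> \<bullet> (X (s+t) \<omega> - X s \<omega>))) \<partial>M)"
      by (simp add: lessThan_nat_numeral \<tau>_def numeral_2_eq_2)
    also have "(\<integral>\<^sup>+\<omega>. ennreal (exp (\<theta> \<bullet> (X s \<omega> - X 0 \<omega>))) \<partial>M) = (\<integral>\<^sup>+\<omega>. ennreal (exp (\<theta> \<bullet> X s \<omega>)) \<partial>M)"
      using levy_facts(3)[OF L] by (intro nn_integral_cong_AE) auto
    also have "(\<integral>\<^sup>+\<omega>. ennreal (exp (\<theta> \<bullet> (X (s+t) \<omega> - X s \<omega>))) \<partial>M)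
        = (\<integral>\<^sup>+x. ennreal (exp (\<theta> \<bullet> x)) \<partial>distr M borel (\<lambda>\<omega>. X (s+t) \<omega> - X s \<omega>))"
      using meas st by (subst nn_integral_distr) auto
    also have "\<dots> = (\<integral>\<^sup>+x. ennreal (exp (\<theta> \<bullet> x)) \<partial>distr M borel (X t))"
      using levy_facts(5)[OF L, of s "s+t"] st by simp
    also have "\<dots> = (\<integral>\<^sup>+\<omega>. ennreal (exp (\<theta> \<bullet> X t \<omega>)) \<partial>M)"
      using meas st by (subst nn_integral_distr) auto
    finally show ?thesis .
  qed
qed

lemma levy_mgf_lsc0:
  assumes L: "levy_process M X" and c: "c < 1"
  shows "eventually (\<lambda>s. c < (\<integral>\<^sup>+\<omega>. ennreal (exp (\<theta> \<bullet> X s \<omega>)) \<partial>M)) (at_right 0)"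
proof (rule ccontr)
  interpret prob_space M using levy_facts[OF L] by simp
  define mgf where "mgf s = (\<integral>\<^sup>+\<omega>. ennreal (exp (\<theta> \<bullet> X s \<omega>)) \<partial>M)" for s
  assume "\<not> ?thesis"
  then have "\<forall>b>0. \<exists>y>0. y < b \<and> mgf y \<le> c"
    unfolding eventually_at_right_field mgf_def by (force simp: not_less)
  then have "\<forall>n::nat. \<exists>y>0. y < 1 / (Suc n) \<and> mgf y \<le> c" by simp
  then obtain s where s: "\<And>n. s n > 0" "\<And>n. s n < 1 / Suc n" "\<And>n. mgf (s n) \<le> c"
    by metis
  have "s \<longlonglongrightarrow> 0"
  proof (rule tendsto_sandwich[of "\<lambda>_. 0" _ _ "\<lambda>n. 1 / Suc n"])
    show "\<forall>\<^sub>F n in sequentially. 0 \<le> s n" using s(1) by (simp add: less_imp_le)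
    show "\<forall>\<^sub>F n in sequentially. s n \<le> 1 / Suc n" using s(2) by (simp add: less_imp_le)
  qed (auto intro: LIMSEQ_Suc lim_const_over_n simp del: of_nat_Suc)
  then have sf: "filterlim s (at_right 0) sequentially"
    using s(1) unfolding filterlim_at by (auto intro!: always_eventually) (metis less_irrefl)
  have meas: "X u \<in> borel_measurable M" if "u \<ge> 0" for u using levy_facts(2)[OF L] that by auto
  have AE1: "AE \<omega> in M. liminf (\<lambda>n. ennreal (exp (\<theta> \<bullet> X (s n) \<omega>))) = 1"
    using levy_facts(3,6)[OF L]
  proof eventually_elim
    case (elim \<omega>)
    have "((\<lambda>u. X u \<omega>) \<longlongrightarrow> X 0 \<omega>) (at_right 0)"
      using elim(2) by (auto simp: continuous_within)
    then have "(\<lambda>n. X (s n) \<omega>) \<longlonglongrightarrow> 0"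
      using filterlim_compose[OF _ sf] elim(1) by auto
    then have "(\<lambda>n. ennreal (exp (\<theta> \<bullet> X (s n) \<omega>))) \<longlonglongrightarrow> ennreal (exp (\<theta> \<bullet> 0))"
      by (intro tendsto_intros)
    then show ?case
      by (intro lim_imp_Liminf) auto
  qed
  have measn[measurable]: "X (s n) \<in> borel_measurable M" for n using meas[of "s n"] s(1)[of n] by simp
  have "1 = (\<integral>\<^sup>+\<omega>. liminf (\<lambda>n. ennreal (exp (\<theta> \<bullet> X (s n) \<omega>))) \<partial>M)"
    using AE1 by (subst nn_integral_cong_AE[OF AE1]) (simp add: emeasure_space_1)
  also have "\<dots> \<le> liminf (\<lambda>n. mgf (s n))"
    unfolding mgf_def by (intro nn_integral_liminf) measurable
  also have "\<dots> \<le> limsup (\<lambda>n. mgf (s n))"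
    by (intro Liminf_le_Limsup sequentially_bot)
  also have "\<dots> \<le> c"
    using s(3) by (intro Limsup_bounded) auto
  finally show False using c by simp
qed

lemma mult_fun_nat:
  fixes f :: "real \<Rightarrow> ennreal"
  assumes f0: "f 0 = 1" and add: "\<And>s t. 0 \<le> s \<Longrightarrow> 0 \<le> t \<Longrightarrow> f (s + t) = f s * f t"
    and x: "0 \<le> x"
  shows "f (real n * x) = f x ^ n"
proof (induction n)
  case 0 then show ?case using f0 by simp
next
  case (Suc n)
  have "f (real (Suc n) * x) = f (real n * x + x)" by (simp add: algebra_simps)
  also have "\<dots> = f (real n * x) * f x" using x by (intro add) auto
  finally show ?case using Suc by (simp add: mult.commute)
qed

lemma mult_fun_powr:
  fixes f :: "real \<Rightarrow> ennreal"
  assumes f0: "f 0 = 1" and add: "\<And>s t. 0 \<le> s \<Longrightarrow> 0 \<le> t \<Longrightarrow> f (s + t) = f s * f t"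
    and pos: "\<And>s. 0 \<le> s \<Longrightarrow> f s \<noteq> 0"
    and lsc: "\<And>c. c < 1 \<Longrightarrow> eventually (\<lambda>s. c < f s) (at_right 0)"
    and u: "0 < u"
  shows "f u = (if f 1 = \<infinity> then \<infinity> else ennreal (exp (u * ln (enn2real (f 1)))))"
proof (cases "f 1 = \<infinity>")
  case True
  obtain n :: nat where n: "1 / u < n" using reals_Archimedean2 by blast
  have npos: "n > 0" using n u by (metis divide_pos_pos less_numeral_extra(1) of_nat_0 of_nat_0_less_iff order.strict_trans)
  have nu: "1 / real n < u" using n u npos by (simp add: field_simps)
  have "f 1 = f (real n * (1 / real n))" using npos by simp
  also have "\<dots> = f (1 / real n) ^ n" by (rule mult_fun_nat[OF f0 add]) auto
  finally have "f (1 / real n) = \<infinity>" using True by (metis infinity_ennreal_def power_eq_top_ennreal_iff) 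
  moreover have "f u = f (1 / real n) * f (u - 1 / real n)"
    using nu add[of "1 / real n" "u - 1 / real n"] by simp
  moreover have "f (u - 1 / real n) \<noteq> 0" using pos nu by simp
  ultimately show ?thesis using True by (simp add: ennreal_top_mult)
next
  case False
  have fin: "f x \<noteq> \<infinity>" if x: "0 \<le> x" for x
  proof -
    obtain m :: nat where m: "x \<le> m" using real_arch_simple by blast
    have "f (real m * 1) = f 1 ^ m" by (rule mult_fun_nat[OF f0 add]) auto
    then have "f (real m) \<noteq> \<infinity>" using False by (simp add: power_eq_top_ennreal_iff)
    moreover have "f (real m) = f x * f (real m - x)" using add[of x "real m - x"] m x by simp
    moreover have "f (real m - x) \<noteq> 0" using pos m by simp
    ultimately show ?thesis by (auto simp: ennreal_mult_eq_top_iff)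
  qed
  define g where "g x = ln (enn2real (f x))" for x
  have fpos: "0 < enn2real (f x)" if "0 \<le> x" for x
    using fin[OF that] pos[OF that] by (simp add: enn2real_positive_iff less_top zero_less_iff_neq_zero)
  have fg: "f x = ennreal (exp (g x))" if "0 \<le> x" for x
    using fpos[OF that] fin[OF that] by (simp add: g_def ennreal_enn2real_if)
  have gadd: "g (s + t) = g s + g t" if "0 \<le> s" "0 \<le> t" for s t
    using add[OF that] fpos[OF that(1)] fpos[OF that(2)] by (simp add: g_def enn2real_mult ln_mult)
  have g0: "g 0 = 0" using f0 by (simp add: g_def)
  have gn: "g (real n * x) = real n * g x" if "0 \<le> x" for n x
  proof (induction n)
    case 0 then show ?case using g0 by simp
  next
    case (Suc n)
    have "g (real (Suc n) * x) = g (real n * x + x)" by (simp add: algebra_simps)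
    also have "\<dots> = g (real n * x) + g x" using that by (intro gadd) auto
    finally show ?case using Suc by (simp add: algebra_simps)
  qed
  have grat: "g (real k / real n) = real k / real n * g 1" if "n > 0" for k n
  proof -
    have "g 1 = g (real n * (1 / real n))" using that by simp
    also have "\<dots> = real n * g (1 / real n)" by (rule gn) simp
    finally have "g (1 / real n) = g 1 / real n" using that by simp
    moreover have "g (real k / real n) = real k * g (1 / real n)"
      using gn[of "1 / real n" k] by simp
    ultimately show ?thesis by simp
  qed
  have glsc: "\<exists>\<delta>>0. \<forall>s. 0 \<le> s \<and> s < \<delta> \<longrightarrow> -e < g s" if e: "e > 0" for e
  proof -
    have "ennreal (exp (-e)) < 1" using e by (subst ennreal_1[symmetric], subst ennreal_less_iff) auto
    from lsc[OF this] obtain b where b: "b > 0" "\<And>s. 0 < s \<Longrightarrow> s < b \<Longrightarrow> ennreal (exp (-e)) < f s"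
      unfolding eventually_at_right_field by auto
    show ?thesis
    proof (intro exI[of _ b] conjI allI impI)
      fix s assume s: "0 \<le> s \<and> s < b"
      show "-e < g s"
      proof (cases "s = 0")
        case True then show ?thesis using g0 e by simp
      next
        case False
        then have "ennreal (exp (-e)) < ennreal (exp (g s))" using b(2)[of s] s fg[of s] by simp
        then have "exp (-e) < exp (g s)" by (simp add: ennreal_less_iff)
        then show ?thesis by simp
      qed
    qed (use b in auto)
  qed
  have bound: "\<bar>g u - u * g 1\<bar> < 2 * e" if e: "e > 0" for e
  proof -
    obtain \<delta> where \<delta>: "\<delta> > 0" "\<And>s. 0 \<le> s \<Longrightarrow> s < \<delta> \<Longrightarrow> -e < g s" using glsc[OF e] by blast
    obtain n :: nat where n: "max (1 / \<delta>) (\<bar>g 1\<bar> / e) < n" using reals_Archimedean2 by blast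
    have n1: "1 / \<delta> < n" and n2: "\<bar>g 1\<bar> / e < n" using n by auto
    have npos: "real n > 0" using n1 \<delta> by (meson divide_pos_pos less_trans zero_less_one)
    have invn: "1 / real n < \<delta>" using n1 \<delta> npos by (simp add: field_simps)
    have invn2: "\<bar>g 1\<bar> / real n < e" using n2 e npos by (simp add: field_simps)
    define k where "k = nat \<lfloor>real n * u\<rfloor>"
    have k: "real k \<le> real n * u" "real n * u < real k + 1"
      using u npos by (auto simp: k_def)
    define q where "q = real k / real n"
    define r where "r = (real k + 1) / real n"
    have uq: "u - q = (real n * u - real k) / real n" using npos by (simp add: q_def field_simps)
    have q3: "u - q < 1 / real n" unfolding uq using k npos by (intro divide_strict_right_mono) auto
    have q: "0 \<le> q" "q \<le> u" "u - q < 1 / real n" using k npos q3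
      by (auto simp: q_def pos_divide_le_eq mult.commute)
    have r: "u < r" "r - u \<le> 1 / real n" using k npos by (auto simp: r_def field_simps)
    have gq: "g q = q * g 1" unfolding q_def using grat npos by simp
    have gr: "g r = r * g 1" unfolding r_def using grat[of n "Suc k"] npos by (simp add: add.commute)
    have "g u = g q + g (u - q)" using gadd[of q "u - q"] q by simp
    moreover have "-e < g (u - q)" using \<delta>(2)[of "u - q"] q invn by simp
    moreover have "g r = g u + g (r - u)" using gadd[of u "r - u"] r u by simp
    moreover have "-e < g (r - u)" using \<delta>(2)[of "r - u"] r invn by simp
    moreover have "\<bar>q * g 1 - u * g 1\<bar> < e"
    proof -
      have "\<bar>q * g 1 - u * g 1\<bar> = \<bar>u - q\<bar> * \<bar>g 1\<bar>" by (simp add: abs_mult[symmetric] algebra_simps)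
      also have "\<dots> \<le> (1 / real n) * \<bar>g 1\<bar>" using q by (intro mult_right_mono) auto
      finally show ?thesis using invn2 by simp
    qed
    moreover have "\<bar>r * g 1 - u * g 1\<bar> < e"
    proof -
      have "\<bar>r * g 1 - u * g 1\<bar> = \<bar>r - u\<bar> * \<bar>g 1\<bar>" by (simp add: abs_mult[symmetric] algebra_simps)
      also have "\<dots> \<le> (1 / real n) * \<bar>g 1\<bar>" using r by (intro mult_right_mono) auto
      finally show ?thesis using invn2 by simp
    qed
    ultimately show ?thesis using gq gr by linarith
  qed
  have gu: "g u = u * g 1"
  proof (rule ccontr)
    assume "g u \<noteq> u * g 1"
    then have "\<bar>g u - u * g 1\<bar> / 2 > 0" by simp
    from bound[OF this] show False by simp
  qed
  have "f u = ennreal (exp (g u))" using fg u by simp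
  also have "\<dots> = ennreal (exp (u * ln (enn2real (f 1))))" using gu by (simp add: g_def)
  finally show ?thesis using False by simp
qed

definition gen_sets :: "'a measure \<Rightarrow> (real \<Rightarrow> 'a \<Rightarrow> 'b::topological_space) \<Rightarrow> 'a set set" where
  "gen_sets M X = (\<Union>t\<in>{0..}. {X t -` A \<inter> space M | A. A \<in> sets borel})"

lemma gen_sets_Pow: "gen_sets M X \<subseteq> Pow (space M)" by (auto simp: gen_sets_def)

lemma sets_TS: "sets (sigma (space M) (gen_sets M X)) = process_sigma M X"
  unfolding process_sigma_def gen_sets_def[symmetric] by (rule sets_measure_of[OF gen_sets_Pow])

lemma space_TS: "space (sigma (space M) (gen_sets M X)) = space M"
  by (rule space_measure_of_conv)

lemma meas_TS:
  assumes "t \<ge> 0"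
  shows "X t \<in> borel_measurable (sigma (space M) (gen_sets M X))"
proof -
  have "X t -` A \<inter> space M \<in> process_sigma M X" if "A \<in> sets borel" for A
    unfolding process_sigma_def using assms that by (intro sigma_sets.Basic) auto
  then show ?thesis unfolding measurable_def using sets_TS[of M X] space_TS[of M X] by auto
qed

lemma id_meas_TS:
  assumes "\<And>t. t \<ge> 0 \<Longrightarrow> X t \<in> borel_measurable M"
  shows "(\<lambda>\<omega>. \<omega>) \<in> measurable M (sigma (space M) (gen_sets M X))"
  using gen_sets_Pow[of M X]
  by (intro measurable_measure_of) (auto simp: gen_sets_def intro!: measurable_sets assms)

lemma process_sigma_subset:
  assumes "\<And>t. t \<ge> 0 \<Longrightarrow> X t \<in> borel_measurable M"
  shows "process_sigma M X \<subseteq> sets M"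
  unfolding process_sigma_def
  by (intro sets.sigma_sets_subset) (auto intro!: measurable_sets assms)

definition dn :: "nat \<Rightarrow> real \<Rightarrow> real" where
  "dn n u = max 0 ((real_of_int \<lfloor>2^n * u\<rfloor> + 1) / 2^n)"

lemma dn_gt: "0 \<le> u \<Longrightarrow> u < dn n u"
proof -
  assume "0 \<le> u"
  have "2^n * u < real_of_int \<lfloor>2^n * u\<rfloor> + 1" by (rule real_of_int_floor_add_one_gt)
  then have "u < (real_of_int \<lfloor>2^n * u\<rfloor> + 1) / 2^n" by (simp add: field_simps)
  then show ?thesis unfolding dn_def by linarith
qed

lemma dn_le: "0 \<le> u \<Longrightarrow> dn n u \<le> u + 1 / 2^n"
proof -
  assume u: "0 \<le> u"
  have "real_of_int \<lfloor>2^n * u\<rfloor> \<le> 2^n * u" by (rule of_int_floor_le)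
  then have "(real_of_int \<lfloor>2^n * u\<rfloor> + 1) / 2^n \<le> u + 1 / 2^n" by (simp add: field_simps)
  moreover have "0 \<le> u + 1 / 2^n" using u by simp
  ultimately show ?thesis unfolding dn_def by linarith
qed

lemma dn_filterlim: "0 \<le> u \<Longrightarrow> filterlim (\<lambda>n. dn n u) (at_right u) sequentially"
proof -
  assume u: "0 \<le> u"
  have "(\<lambda>n. 1 / (2::real)^n) \<longlonglongrightarrow> 0" by (rule LIMSEQ_divide_realpow_zero) simp
  then have "(\<lambda>n. u + 1 / 2^n) \<longlonglongrightarrow> u + 0" by (rule tendsto_add[OF tendsto_const])
  then have h: "(\<lambda>n. u + 1 / 2^n) \<longlonglongrightarrow> u" by simp
  have e1: "\<forall>\<^sub>F n in sequentially. u \<le> dn n u"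
    by (intro always_eventually allI less_imp_le dn_gt u)
  have e2: "\<forall>\<^sub>F n in sequentially. dn n u \<le> u + 1 / 2^n"
    by (intro always_eventually allI dn_le u)
  have "(\<lambda>n. dn n u) \<longlonglongrightarrow> u"
    by (rule tendsto_sandwich[OF e1 e2 tendsto_const h])
  moreover have "\<forall>\<^sub>F n in sequentially. dn n u \<in> {u<..} \<and> dn n u \<noteq> u"
    using dn_gt[OF u] by (intro always_eventually allI) (simp add: order.strict_implies_not_eq[THEN not_sym])
  ultimately show ?thesis unfolding filterlim_at by simp
qed

lemma dn_meas:
  fixes X :: "real \<Rightarrow> 'a \<Rightarrow> 'b::euclidean_space"
  shows "(\<lambda>x. X (dn n (snd x)) (fst x)) \<in> borel_measurable (sigma (space M) (gen_sets M X) \<Otimes>\<^sub>M borel)"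
proof -
  have "(\<lambda>x. X (max 0 ((real_of_int \<lfloor>(2::real)^n * snd x\<rfloor> + 1) / 2^n)) (fst x)) \<in>
       borel_measurable (sigma (space M) (gen_sets M X) \<Otimes>\<^sub>M borel)"
  proof (rule measurable_compose_countable[where f="\<lambda>k x. X (max 0 ((real_of_int (k::int) + 1) / 2^n)) (fst x)" and g="\<lambda>x. \<lfloor>(2::real)^n * snd x\<rfloor>"])
    fix k :: int
    show "(\<lambda>x. X (max 0 ((real_of_int k + 1) / 2^n)) (fst x)) \<in> borel_measurable (sigma (space M) (gen_sets M X) \<Otimes>\<^sub>M borel)"
      by (rule measurable_compose[OF measurable_fst meas_TS]) simp
  next
    show "(\<lambda>x. \<lfloor>(2::real)^n * snd x\<rfloor>) \<in> measurable (sigma (space M) (gen_sets M X) \<Otimes>\<^sub>M borel) (count_space UNIV)"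
      by measurable
  qed
  then show ?thesis by (simp add: dn_def)
qed

definition Xver :: "(real \<Rightarrow> 'a \<Rightarrow> 'b::euclidean_space) \<Rightarrow> 'a \<times> real \<Rightarrow> 'b" where
  "Xver X x = lim (\<lambda>n. X (dn n (snd x)) (fst x))"

lemma Xver_meas: "Xver X \<in> borel_measurable (sigma (space M) (gen_sets M X) \<Otimes>\<^sub>M borel)"
  unfolding Xver_def by (intro borel_measurable_lim_metric dn_meas)

lemma Xver_eq:
  assumes "continuous (at_right u) (\<lambda>s. X s \<omega>)" "0 \<le> u"
  shows "Xver X (\<omega>, u) = X u \<omega>"
proof -
  have "((\<lambda>s. X s \<omega>) \<longlongrightarrow> X u \<omega>) (at_right u)" using assms(1) by (auto simp: continuous_within)
  then have "(\<lambda>n. X (dn n u) \<omega>) \<longlonglongrightarrow> X u \<omega>"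
    using filterlim_compose[OF _ dn_filterlim[OF assms(2)]] by auto
  then show ?thesis unfolding Xver_def by (simp add: limI)
qed

lemma levy_random_time:
  fixes S :: "real \<Rightarrow> 'a \<Rightarrow> 'b::euclidean_space" and U :: "'a \<Rightarrow> real"
  assumes L: "levy_process M S"
    and U[measurable]: "U \<in> borel_measurable M"
    and Usig: "\<And>A. A \<in> sets borel \<Longrightarrow> U -` A \<inter> space M \<in> B"
    and Bsig: "sigma_algebra (space M) B"
    and indep: "prob_space.indep_set M (process_sigma M S) B"
    and Upos: "AE \<omega> in M. 0 \<le> U \<omega>"
  shows "(\<integral>\<^sup>+\<omega>. ennreal (exp (\<theta> \<bullet> S (U \<omega>) \<omega>)) \<partial>M) =
         (\<integral>\<^sup>+\<omega>. (\<integral>\<^sup>+\<omega>'. ennreal (exp (\<theta> \<bullet> S (U \<omega>) \<omega>')) \<partial>M) \<partial>M)"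
proof -
  interpret prob_space M using levy_facts[OF L] by simp
  define TS where "TS = sigma (space M) (gen_sets M S)"
  have measS: "S t \<in> borel_measurable M" if "t \<ge> 0" for t using levy_facts(2)[OF L] that by simp
  have idm[measurable]: "(\<lambda>\<omega>. \<omega>) \<in> measurable M TS" unfolding TS_def by (rule id_meas_TS) (rule measS)
  have PS: "sigma_algebra (space M) (process_sigma M S)"
    unfolding process_sigma_def gen_sets_def[symmetric] by (rule sigma_algebra_sigma_sets[OF gen_sets_Pow])
  have ind: "prob (((\<lambda>\<omega>. \<omega>) -` A \<inter> space M) \<inter> (U -` C \<inter> space M)) =
      prob ((\<lambda>\<omega>. \<omega>) -` A \<inter> space M) * prob (U -` C \<inter> space M)"
    if A: "A \<in> sets TS" and C: "C \<in> sets borel" for A C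
  proof -
    from A have A': "A \<in> process_sigma M S" unfolding TS_def sets_TS .
    then have "A \<subseteq> space M" unfolding process_sigma_def gen_sets_def[symmetric] by (rule sigma_sets_into_sp[OF gen_sets_Pow])
    then have eqA: "(\<lambda>\<omega>. \<omega>) -` A \<inter> space M = A" by auto
    show ?thesis unfolding eqA by (rule indep_setD[OF indep A' Usig[OF C]])
  qed
  define h where "h x = ennreal (exp (\<theta> \<bullet> Xver S x))" for x
  have hm[measurable]: "h \<in> borel_measurable (TS \<Otimes>\<^sub>M borel)"
    unfolding h_def TS_def using Xver_meas[of S M] by measurable
  have good: "AE \<omega> in M. \<forall>t\<ge>0. continuous (at_right t) (\<lambda>s. S s \<omega>)" by (rule levy_facts(6)[OF L])
  have "(\<integral>\<^sup>+\<omega>. ennreal (exp (\<theta> \<bullet> S (U \<omega>) \<omega>)) \<partial>M) = (\<integral>\<^sup>+\<omega>. h (\<omega>, U \<omega>) \<partial>M)"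
    using good Upos by (intro nn_integral_cong_AE) (auto simp: h_def Xver_eq)
  also have "\<dots> = (\<integral>\<^sup>+y. \<integral>\<^sup>+x. h (x,y) \<partial>distr M TS (\<lambda>\<omega>. \<omega>) \<partial>distr M borel U)"
    by (rule indep_nn_integral_pair[OF idm U ind hm])
  also have "\<dots> = (\<integral>\<^sup>+y. \<integral>\<^sup>+x. h (x,y) \<partial>M \<partial>distr M borel U)"
    by (intro nn_integral_cong, subst nn_integral_distr) auto
  also have "\<dots> = (\<integral>\<^sup>+\<omega>. \<integral>\<^sup>+x. h (x, U \<omega>) \<partial>M \<partial>M)"
  proof -
    interpret N: prob_space "distr M TS (\<lambda>\<omega>. \<omega>)" by (rule prob_space_distr) measurable
    have "(\<lambda>y. \<integral>\<^sup>+x. h (x,y) \<partial>distr M TS (\<lambda>\<omega>. \<omega>)) \<in> borel_measurable borel"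
      by measurable
    moreover have "(\<integral>\<^sup>+x. h (x,y) \<partial>distr M TS (\<lambda>\<omega>. \<omega>)) = (\<integral>\<^sup>+x. h (x,y) \<partial>M)" for y
      by (subst nn_integral_distr) auto
    ultimately have m: "(\<lambda>y. \<integral>\<^sup>+x. h (x,y) \<partial>M) \<in> borel_measurable borel" by simp
    show ?thesis using m by (subst nn_integral_distr) auto
  qed
  also have "\<dots> = (\<integral>\<^sup>+\<omega>. (\<integral>\<^sup>+\<omega>'. ennreal (exp (\<theta> \<bullet> S (U \<omega>) \<omega>')) \<partial>M) \<partial>M)"
  proof (intro nn_integral_cong_AE)
    show "AE \<omega> in M. (\<integral>\<^sup>+x. h (x, U \<omega>) \<partial>M) = (\<integral>\<^sup>+\<omega>'. ennreal (exp (\<theta> \<bullet> S (U \<omega>) \<omega>')) \<partial>M)"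
      using Upos
    proof eventually_elim
      case (elim \<omega>)
      show ?case using good elim by (intro nn_integral_cong_AE) (auto simp: h_def Xver_eq)
    qed
  qed
  finally show ?thesis .
qed

lemma levy_mgf_pos:
  assumes L: "levy_process M X" and s: "0 \<le> s"
  shows "(\<integral>\<^sup>+\<omega>. ennreal (exp (\<theta> \<bullet> X s \<omega>)) \<partial>M) \<noteq> 0"
proof
  interpret prob_space M using levy_facts[OF L] by simp
  have [measurable]: "X s \<in> borel_measurable M" using levy_facts(2)[OF L] s by simp
  assume "(\<integral>\<^sup>+\<omega>. ennreal (exp (\<theta> \<bullet> X s \<omega>)) \<partial>M) = 0"
  then have "AE \<omega> in M. ennreal (exp (\<theta> \<bullet> X s \<omega>)) = 0"
    by (subst (asm) nn_integral_0_iff_AE) auto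
  then have "AE \<omega> in M. False" by simp
  then show False by (simp add: AE_False)
qed

lemma levy_mgf_formula:
  assumes L: "levy_process M X" and u: "0 \<le> u"
  shows "(\<integral>\<^sup>+\<omega>. ennreal (exp (\<theta> \<bullet> X u \<omega>)) \<partial>M) =
    (if (\<integral>\<^sup>+\<omega>. ennreal (exp (\<theta> \<bullet> X 1 \<omega>)) \<partial>M) = \<infinity> \<and> 0 < u then \<infinity>
     else ennreal (exp (u * ln (enn2real (\<integral>\<^sup>+\<omega>. ennreal (exp (\<theta> \<bullet> X 1 \<omega>)) \<partial>M)))))"
proof (cases "u = 0")
  case True then show ?thesis using levy_mgf0[OF L] by simp
next
  case False
  then have u': "0 < u" using u by simp
  define f where "f s = (\<integral>\<^sup>+\<omega>. ennreal (exp (\<theta> \<bullet> X s \<omega>)) \<partial>M)" for s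
  have "f u = (if f 1 = \<infinity> then \<infinity> else ennreal (exp (u * ln (enn2real (f 1)))))"
  proof (rule mult_fun_powr[OF _ _ _ _ u'])
    show "f 0 = 1" unfolding f_def by (rule levy_mgf0[OF L])
    show "f (s + t) = f s * f t" if "0 \<le> s" "0 \<le> t" for s t
      unfolding f_def by (rule levy_mgf_add[OF L that])
    show "f s \<noteq> 0" if "0 \<le> s" for s unfolding f_def by (rule levy_mgf_pos[OF L that])
    show "eventually (\<lambda>s. c < f s) (at_right 0)" if "c < 1" for c
      unfolding f_def by (rule levy_mgf_lsc0[OF L that])
  qed
  then show ?thesis using u' by (simp add: f_def)
qed

lemma abs_exp_sub1: "\<bar>exp x - 1\<bar> \<le> \<bar>x\<bar> * exp \<bar>x\<bar>" for x :: real
proof (cases "x \<ge> 0")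
  case True
  have "1 - x \<le> exp (-x)" using exp_ge_add_one_self[of "-x"] by simp
  then have "(1 - x) * exp x \<le> exp (-x) * exp x" by (intro mult_right_mono) auto
  then have "exp x - x * exp x \<le> 1" by (simp add: algebra_simps exp_minus_inverse)
  then show ?thesis using True by simp
next
  case False
  have "1 + x \<le> exp x" by (rule exp_ge_add_one_self)
  moreover have "1 \<le> exp (-x)" using False by simp
  then have "(-x) * 1 \<le> (-x) * exp (-x)" using False by (intro mult_left_mono) auto
  moreover have "\<bar>exp x - 1\<bar> = 1 - exp x" using False by simp
  moreover have "\<bar>x\<bar> * exp \<bar>x\<bar> = (-x) * exp (-x)" using False by simp
  ultimately show ?thesis by linarith
qed

lemma mgf_has_deriv:
  fixes Y :: "'a \<Rightarrow> real"
  assumes P: "prob_space M" and Ym[measurable]: "Y \<in> borel_measurable M"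
    and Ypos: "AE \<omega> in M. 0 \<le> Y \<omega>" and eps: "\<epsilon> > 0"
    and fin: "\<And>\<eta>. \<bar>\<eta>\<bar> < \<epsilon> \<Longrightarrow> (\<integral>\<^sup>+\<omega>. ennreal (exp (\<eta> * Y \<omega>)) \<partial>M) < \<infinity>"
  shows "\<exists>D. ((\<lambda>\<eta>. ln (\<integral>\<omega>. exp (\<eta> * Y \<omega>) \<partial>M)) has_field_derivative D) (at 0)"
proof -
  interpret prob_space M by (rule P)
  define Gb where "Gb \<eta> = (\<integral>\<omega>. exp (\<eta> * Y \<omega>) \<partial>M)" for \<eta>
  have int: "integrable M (\<lambda>\<omega>. exp (\<eta> * Y \<omega>))" if "\<bar>\<eta>\<bar> < \<epsilon>" for \<eta>
    using fin[OF that] by (intro integrableI_bounded) auto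
  have G0: "Gb 0 = 1" by (simp add: Gb_def prob_space.prob_space[OF P])
  define \<delta> where "\<delta> = \<epsilon> / 4"
  have \<delta>: "\<delta> > 0" "2 * \<delta> < \<epsilon>" "\<delta> < \<epsilon>" using eps by (auto simp: \<delta>_def)
  define w where "w \<omega> = (1 / \<delta>) * exp ((2 * \<delta>) * Y \<omega>)" for \<omega>
  have wint: "integrable M w" unfolding w_def using int[of "2 * \<delta>"] \<delta> by (intro integrable_mult_right) auto
  define Q where "Q h = (Gb h - Gb 0) / (h - 0)" for h
  have "(Q \<longlongrightarrow> (\<integral>\<omega>. Y \<omega> \<partial>M)) (at 0 within {-\<delta><..<\<delta>})"
    unfolding tendsto_at_iff_sequentially
  proof (intro allI impI)
    fix X :: "nat \<Rightarrow> real" assume X: "\<forall>i. X i \<in> {-\<delta><..<\<delta>} - {0}" and Xl: "X \<longlonglongrightarrow> 0"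
    have Xf: "filterlim X (at 0) sequentially" using X Xl by (auto simp: filterlim_at intro!: always_eventually)
    define s where "s i \<omega> = (exp (X i * Y \<omega>) - 1) / X i" for i \<omega>
    have Qs: "Q (X i) = (\<integral>\<omega>. s i \<omega> \<partial>M)" for i
    proof -
      have "\<bar>X i\<bar> < \<epsilon>" using X[rule_format, of i] \<delta> by (simp add: abs_less_iff)
      then have "integrable M (\<lambda>\<omega>. exp (X i * Y \<omega>))" by (rule int)
      then show ?thesis unfolding Q_def s_def Gb_def
        by (simp add: prob_space.prob_space[OF P])
    qed
    have "(\<lambda>i. \<integral>\<omega>. s i \<omega> \<partial>M) \<longlonglongrightarrow> (\<integral>\<omega>. Y \<omega> \<partial>M)"
    proof (rule integral_dominated_convergence[where w=w])
      show "Y \<in> borel_measurable M" by simp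
      show "s i \<in> borel_measurable M" for i unfolding s_def by measurable
      show "integrable M w" by (rule wint)
      show "AE \<omega> in M. (\<lambda>i. s i \<omega>) \<longlonglongrightarrow> Y \<omega>"
      proof (intro AE_I2)
        fix \<omega>
        have "((\<lambda>h. exp (h * Y \<omega>)) has_field_derivative (exp (0 * Y \<omega>) * Y \<omega>)) (at 0)"
          by (auto intro!: derivative_eq_intros)
        then have "((\<lambda>h. (exp (h * Y \<omega>) - exp (0 * Y \<omega>)) / (h - 0)) \<longlongrightarrow> Y \<omega>) (at 0)"
          unfolding has_field_derivative_iff by simp
        from filterlim_compose[OF this Xf] show "(\<lambda>i. s i \<omega>) \<longlonglongrightarrow> Y \<omega>" by (simp add: s_def)
      qed
      show "AE \<omega> in M. norm (s i \<omega>) \<le> w \<omega>" for i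
        using Ypos
      proof eventually_elim
        case (elim \<omega>)
        have Xi: "X i \<noteq> 0" "\<bar>X i\<bar> < \<delta>" using X[rule_format, of i] by (auto simp: abs_less_iff)
        have "norm (s i \<omega>) = \<bar>exp (X i * Y \<omega>) - 1\<bar> / \<bar>X i\<bar>" by (simp add: s_def)
        also have "\<dots> \<le> (\<bar>X i * Y \<omega>\<bar> * exp \<bar>X i * Y \<omega>\<bar>) / \<bar>X i\<bar>"
          by (intro divide_right_mono abs_exp_sub1) auto
        also have "\<dots> = Y \<omega> * exp (\<bar>X i\<bar> * Y \<omega>)" using Xi elim by (simp add: abs_mult)
        also have "\<dots> \<le> Y \<omega> * exp (\<delta> * Y \<omega>)"
          using Xi elim by (intro mult_left_mono) (auto intro!: mult_right_mono)
        also have "\<dots> \<le> (1 / \<delta>) * exp (\<delta> * Y \<omega>) * exp (\<delta> * Y \<omega>)"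
        proof -
          have "\<delta> * Y \<omega> \<le> exp (\<delta> * Y \<omega>)" using exp_ge_add_one_self[of "\<delta> * Y \<omega>"] by linarith
          then have "Y \<omega> \<le> (1 / \<delta>) * exp (\<delta> * Y \<omega>)" using \<delta> by (simp add: field_simps)
          then show ?thesis by (intro mult_right_mono) auto
        qed
        also have "\<dots> = w \<omega>" unfolding w_def by (simp add: exp_add[symmetric] algebra_simps)
        finally show ?case .
      qed
    qed
    then show "(Q \<circ> X) \<longlonglongrightarrow> (\<integral>\<omega>. Y \<omega> \<partial>M)" by (simp add: comp_def Qs)
  qed
  moreover have eqat: "at (0::real) within {-\<delta><..<\<delta>} = at 0"
    by (rule at_within_open) (use \<delta> in auto)
  ultimately have "(Q \<longlongrightarrow> (\<integral>\<omega>. Y \<omega> \<partial>M)) (at 0)"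
    by (simp only: eqat)
  then have dG: "(Gb has_field_derivative (\<integral>\<omega>. Y \<omega> \<partial>M)) (at 0)"
    unfolding has_field_derivative_iff Q_def .
  have "((\<lambda>\<eta>. ln (Gb \<eta>)) has_field_derivative inverse (Gb 0) * (\<integral>\<omega>. Y \<omega> \<partial>M)) (at 0)"
    by (rule DERIV_chain2[OF DERIV_ln dG]) (simp add: G0)
  then show ?thesis unfolding Gb_def by blast
qed

lemma lim_tK:
  fixes K :: "real \<Rightarrow> real"
  assumes dK: "(K has_field_derivative D0) (at 0)" and K0: "K 0 = 0"
  shows "((\<lambda>t. t * K (c / t)) \<longlongrightarrow> c * D0) at_top"
proof (cases "c = 0")
  case True then show ?thesis using K0 by simp
next
  case False
  have q: "((\<lambda>h. (K h - K 0) / (h - 0)) \<longlongrightarrow> D0) (at 0)"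
    using dK unfolding has_field_derivative_iff .
  have "((\<lambda>t. c / t) \<longlongrightarrow> 0) at_top"
    by (rule tendsto_divide_0[OF tendsto_const filterlim_at_top_imp_at_infinity[OF filterlim_ident]])
  moreover have "\<forall>\<^sub>F t in at_top. c / t \<noteq> 0" using eventually_gt_at_top[of "0::real"] by (rule eventually_mono) (use False in auto)
  ultimately have f: "filterlim (\<lambda>t. c / t) (at 0) at_top" by (auto simp: filterlim_at)
  have "((\<lambda>t. c * ((K (c / t) - K 0) / (c / t - 0))) \<longlongrightarrow> c * D0) at_top"
    by (intro tendsto_mult tendsto_const filterlim_compose[OF q f])
  moreover have "\<forall>\<^sub>F t in at_top. c * ((K (c / t) - K 0) / (c / t - 0)) = t * K (c / t)"
    using eventually_gt_at_top[of "0::real"] by (rule eventually_mono) (use False K0 in \<open>auto simp: field_simps\<close>)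
  ultimately show ?thesis by (rule Lim_transform_eventually)
qed

lemma ennexp_inf: "ennexp \<infinity> = \<infinity>"
  using ennexp.simps(2) by simp

theorem proposition4p2:
  fixes M :: "'a measure"
    and S :: "real \<Rightarrow> 'a \<Rightarrow> real ^ 'h"
    and V :: "real \<Rightarrow> 'a \<Rightarrow> real"
  assumes S_levy: "levy_process M S"
    and S_mgf: "\<exists>\<epsilon>>0. \<forall>\<theta>::real^'h. norm \<theta> < \<epsilon> \<longrightarrow>
                  (\<integral>\<^sup>+ \<omega>. ennreal (exp (\<theta> \<bullet> S 1 \<omega>)) \<partial>M) < \<infinity>"
    and V_sub: "subordinator M V"
    and indep: "prob_space.indep_set M (process_sigma M S) (process_sigma M V)"
    and V_mgf: "\<exists>\<epsilon>>0. \<forall>\<eta>::real. \<bar>\<eta>\<bar> < \<epsilon> \<longrightarrow>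
                  (\<integral>\<^sup>+ \<omega>. ennreal (exp (\<eta> * V 1 \<omega>)) \<partial>M) < \<infinity>"
    and V_drift: "deriv (\<lambda>\<eta>. ln (\<integral>\<omega>. exp (\<eta> * V 1 \<omega>) \<partial>M)) 0 > 0"
  shows "\<forall>\<theta>::real^'h.
     ((\<lambda>t. \<integral>\<^sup>+ \<omega>. ennreal (exp (\<theta> \<bullet> S (V t \<omega> / t) \<omega>)) \<partial>M) \<longlongrightarrow>
        (\<integral>\<^sup>+ \<omega>. ennreal (exp (\<theta> \<bullet> S (deriv (\<lambda>\<eta>. ln (\<integral>\<omega>. exp (\<eta> * V 1 \<omega>) \<partial>M)) 0) \<omega>)) \<partial>M)) at_top
   \<and> (\<integral>\<^sup>+ \<omega>. ennreal (exp (\<theta> \<bullet> S (deriv (\<lambda>\<eta>. ln (\<integral>\<omega>. exp (\<eta> * V 1 \<omega>) \<partial>M)) 0) \<omega>)) \<partial>M)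
       = ennexp (ereal (deriv (\<lambda>\<eta>. ln (\<integral>\<omega>. exp (\<eta> * V 1 \<omega>) \<partial>M)) 0)
                 * ennln (\<integral>\<^sup>+ \<omega>. ennreal (exp (\<theta> \<bullet> S 1 \<omega>)) \<partial>M))"
proof -
  interpret prob_space M using levy_facts[OF S_levy] by simp
  define K where "K = (\<lambda>\<eta>. ln (\<integral>\<omega>. exp (\<eta> * V 1 \<omega>) \<partial>M))"
  define D where "D = deriv K 0"
  have VL: "levy_process M V" and Vmono: "AE \<omega> in M. mono_on {0..} (\<lambda>t. V t \<omega>)"
    using V_sub unfolding subordinator_def by auto
  have Vm[measurable]: "V t \<in> borel_measurable M" if "t \<ge> 0" for t using levy_facts(2)[OF VL] that by simp
  have Vpos: "AE \<omega> in M. 0 \<le> V t \<omega>" if t: "t \<ge> 0" for t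
    using Vmono levy_facts(3)[OF VL]
  proof eventually_elim
    case (elim \<omega>)
    have "V 0 \<omega> \<le> V t \<omega>" by (rule mono_onD[OF elim(1)]) (use t in auto)
    then show ?case using elim by simp
  qed
  obtain \<epsilon> where eps: "\<epsilon> > 0" and fin: "\<And>\<eta>. \<bar>\<eta>\<bar> < \<epsilon> \<Longrightarrow> (\<integral>\<^sup>+ \<omega>. ennreal (exp (\<eta> * V 1 \<omega>)) \<partial>M) < \<infinity>"
    using V_mgf by auto
  obtain D0 where dK: "(K has_field_derivative D0) (at 0)"
    using mgf_has_deriv[OF prob_space_axioms Vm[of 1] Vpos[of 1] eps fin] unfolding K_def by auto
  have DD0: "D = D0" unfolding D_def by (rule DERIV_imp_deriv[OF dK])
  have Dpos: "D > 0" using V_drift unfolding D_def K_def .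
  have int: "integrable M (\<lambda>\<omega>. exp (\<eta> * V 1 \<omega>))" if "\<bar>\<eta>\<bar> < \<epsilon>" for \<eta>
    using fin[OF that] by (intro integrableI_bounded) auto
  have GK: "enn2real (\<integral>\<^sup>+ \<omega>. ennreal (exp (\<eta> * V 1 \<omega>)) \<partial>M) = exp (K \<eta>)"
    "(\<integral>\<^sup>+ \<omega>. ennreal (exp (\<eta> * V 1 \<omega>)) \<partial>M) \<noteq> \<infinity>" if "\<bar>\<eta>\<bar> < \<epsilon>" for \<eta>
  proof -
    have e1: "(\<integral>\<^sup>+ \<omega>. ennreal (exp (\<eta> * V 1 \<omega>)) \<partial>M) = ennreal (\<integral>\<omega>. exp (\<eta> * V 1 \<omega>) \<partial>M)"
      by (rule nn_integral_eq_integral[OF int[OF that]]) auto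
    moreover have "(\<integral>\<^sup>+ \<omega>. ennreal (exp (\<eta> * V 1 \<omega>)) \<partial>M) \<noteq> 0"
      using levy_mgf_pos[OF VL, of 1 \<eta>] by simp
    moreover have "0 \<le> (\<integral>\<omega>. exp (\<eta> * V 1 \<omega>) \<partial>M)" by (intro integral_nonneg_AE) auto
    ultimately have "(\<integral>\<omega>. exp (\<eta> * V 1 \<omega>) \<partial>M) > 0" by (metis ennreal_0 order_le_less)
    with e1 show "enn2real (\<integral>\<^sup>+ \<omega>. ennreal (exp (\<eta> * V 1 \<omega>)) \<partial>M) = exp (K \<eta>)"
      "(\<integral>\<^sup>+ \<omega>. ennreal (exp (\<eta> * V 1 \<omega>)) \<partial>M) \<noteq> \<infinity>" by (auto simp: K_def)
  qed
  have mgfV: "(\<integral>\<^sup>+\<omega>. ennreal (exp (\<eta> * V u \<omega>)) \<partial>M) =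
    (if (\<integral>\<^sup>+\<omega>. ennreal (exp (\<eta> * V 1 \<omega>)) \<partial>M) = \<infinity> \<and> 0 < u then \<infinity>
     else ennreal (exp (u * ln (enn2real (\<integral>\<^sup>+\<omega>. ennreal (exp (\<eta> * V 1 \<omega>)) \<partial>M)))))" if "0 \<le> u" for \<eta> u
    using levy_mgf_formula[OF VL that, of \<eta>] by simp
  show ?thesis unfolding K_def[symmetric] D_def[symmetric]
  proof (intro allI conjI)
    fix \<theta> :: "real ^ 'h"
    define F where "F = (\<integral>\<^sup>+ \<omega>. ennreal (exp (\<theta> \<bullet> S 1 \<omega>)) \<partial>M)"
    have mgfS: "(\<integral>\<^sup>+\<omega>. ennreal (exp (\<theta> \<bullet> S u \<omega>)) \<partial>M) =
       (if F = \<infinity> \<and> 0 < u then \<infinity> else ennreal (exp (u * ln (enn2real F))))" if "0 \<le> u" for u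
      unfolding F_def by (rule levy_mgf_formula[OF S_levy that])
    have F0: "F \<noteq> 0" unfolding F_def by (rule levy_mgf_pos[OF S_levy]) simp
    have R: "(\<integral>\<^sup>+\<omega>. ennreal (exp (\<theta> \<bullet> S D \<omega>)) \<partial>M) = (if F = \<infinity> then \<infinity> else ennreal (exp (D * ln (enn2real F))))"
      using mgfS[of D] Dpos by simp
    show "(\<integral>\<^sup>+\<omega>. ennreal (exp (\<theta> \<bullet> S D \<omega>)) \<partial>M) = ennexp (ereal D * ennln (\<integral>\<^sup>+ \<omega>. ennreal (exp (\<theta> \<bullet> S 1 \<omega>)) \<partial>M))"
      unfolding F_def[symmetric] R using Dpos F0 by (cases "F = \<infinity>") (auto simp: ennln_def ennexp_inf)
  next
    fix \<theta> :: "real ^ 'h"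
    define F where "F = (\<integral>\<^sup>+ \<omega>. ennreal (exp (\<theta> \<bullet> S 1 \<omega>)) \<partial>M)"
    have mgfS: "(\<integral>\<^sup>+\<omega>. ennreal (exp (\<theta> \<bullet> S u \<omega>)) \<partial>M) =
       (if F = \<infinity> \<and> 0 < u then \<infinity> else ennreal (exp (u * ln (enn2real F))))" if "0 \<le> u" for u
      unfolding F_def by (rule levy_mgf_formula[OF S_levy that])
    have R: "(\<integral>\<^sup>+\<omega>. ennreal (exp (\<theta> \<bullet> S D \<omega>)) \<partial>M) = (if F = \<infinity> then \<infinity> else ennreal (exp (D * ln (enn2real F))))"
      using mgfS[of D] Dpos by simp
    have Bsig: "sigma_algebra (space M) (process_sigma M V)"
      unfolding process_sigma_def gen_sets_def[symmetric] by (rule sigma_algebra_sigma_sets[OF gen_sets_Pow])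
    have VposT: "AE \<omega> in M. 0 \<le> V t \<omega>" if "t > 0" for t using Vpos that by simp
    have LHS: "(\<integral>\<^sup>+\<omega>. ennreal (exp (\<theta> \<bullet> S (V t \<omega> / t) \<omega>)) \<partial>M) =
       (\<integral>\<^sup>+\<omega>. (if F = \<infinity> \<and> 0 < V t \<omega> / t then \<infinity> else ennreal (exp (V t \<omega> / t * ln (enn2real F)))) \<partial>M)"
      if t: "t > 0" for t
    proof -
      have Vt[measurable]: "V t \<in> borel_measurable M" using Vm[of t] t by simp
      have Um: "(\<lambda>\<omega>. V t \<omega> / t) \<in> borel_measurable M" by measurable
      have Usig: "(\<lambda>\<omega>. V t \<omega> / t) -` A \<inter> space M \<in> process_sigma M V" if A: "A \<in> sets borel" for A
      proof -
        have "(\<lambda>x::real. x / t) \<in> borel_measurable borel" by measurable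
        then have A': "(\<lambda>x::real. x / t) -` A \<in> sets borel" using A by (metis measurable_sets space_borel Int_UNIV_right)
        have "(\<lambda>\<omega>. V t \<omega> / t) -` A \<inter> space M = V t -` ((\<lambda>x::real. x / t) -` A) \<inter> space M" by auto
        also have "\<dots> \<in> process_sigma M V"
          unfolding process_sigma_def using A' t by (intro sigma_sets.Basic UN_I[of t]) auto
        finally show ?thesis .
      qed
      have Upos: "AE \<omega> in M. 0 \<le> V t \<omega> / t" using VposT[OF t] by (rule eventually_mono) (use t in auto)
      have "(\<integral>\<^sup>+\<omega>. ennreal (exp (\<theta> \<bullet> S (V t \<omega> / t) \<omega>)) \<partial>M) =
         (\<integral>\<^sup>+\<omega>. (\<integral>\<^sup>+\<omega>'. ennreal (exp (\<theta> \<bullet> S (V t \<omega> / t) \<omega>')) \<partial>M) \<partial>M)"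
        by (rule levy_random_time[OF S_levy Um Usig Bsig indep Upos])
      also have "\<dots> = (\<integral>\<^sup>+\<omega>. (if F = \<infinity> \<and> 0 < V t \<omega> / t then \<infinity> else ennreal (exp (V t \<omega> / t * ln (enn2real F)))) \<partial>M)"
        by (rule nn_integral_cong_AE, rule eventually_mono[OF Upos], rule mgfS)
      finally show ?thesis .
    qed
    show "((\<lambda>t. \<integral>\<^sup>+\<omega>. ennreal (exp (\<theta> \<bullet> S (V t \<omega> / t) \<omega>)) \<partial>M) \<longlongrightarrow>
        (\<integral>\<^sup>+\<omega>. ennreal (exp (\<theta> \<bullet> S D \<omega>)) \<partial>M)) at_top"
    proof (cases "F = \<infinity>")
      case True
      have inf: "(\<integral>\<^sup>+\<omega>. ennreal (exp (\<theta> \<bullet> S (V t \<omega> / t) \<omega>)) \<partial>M) = \<infinity>" if t: "t > 0" for t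
      proof (rule ccontr)
        assume ne: "(\<integral>\<^sup>+\<omega>. ennreal (exp (\<theta> \<bullet> S (V t \<omega> / t) \<omega>)) \<partial>M) \<noteq> \<infinity>"
        have "(\<integral>\<^sup>+\<omega>. ennreal (exp (\<theta> \<bullet> S (V t \<omega> / t) \<omega>)) \<partial>M) =
           (\<integral>\<^sup>+\<omega>. (if 0 < V t \<omega> then \<infinity> else 1) \<partial>M)"
          unfolding LHS[OF t] using VposT[OF t]
          by (intro nn_integral_cong_AE) (rule eventually_mono, use t True in \<open>auto simp: zero_less_divide_iff\<close>)
        with ne have "AE \<omega> in M. (if 0 < V t \<omega> then \<infinity> else (1::ennreal)) \<noteq> \<infinity>"
          using Vm[of t] t by (intro nn_integral_noteq_infinite) auto
        then have V0: "AE \<omega> in M. V t \<omega> = 0" using VposT[OF t]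
          by eventually_elim (auto split: if_splits)
        have K0: "K \<eta> = 0" if \<eta>: "\<bar>\<eta>\<bar> < \<epsilon>" for \<eta>
        proof -
          have "(\<integral>\<^sup>+\<omega>. ennreal (exp (\<eta> * V t \<omega>)) \<partial>M) = (\<integral>\<^sup>+\<omega>. 1 \<partial>M)"
            by (rule nn_integral_cong_AE, rule eventually_mono[OF V0]) simp
          then have "1 = ennreal (exp (t * K \<eta>))"
            using mgfV[of t \<eta>] t GK[OF \<eta>] by (simp add: emeasure_space_1)
          then have "exp (t * K \<eta>) = 1" by (metis ennreal_1 ennreal_inj exp_ge_zero zero_le_one)
          then show ?thesis using t by simp
        qed
        have "((\<lambda>_. 0) has_field_derivative 0) (at (0::real))" by simp
        then have "(K has_field_derivative 0) (at 0)"
          by (rule has_field_derivative_transform_within_open[where S="{-\<epsilon><..<\<epsilon>}"])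
             (use eps K0 in \<open>auto simp: abs_less_iff\<close>)
        then have "D0 = 0" using dK by (rule DERIV_unique[rotated])
        then show False using Dpos DD0 by simp
      qed
      have "\<forall>\<^sub>F t in at_top. (\<integral>\<^sup>+\<omega>. ennreal (exp (\<theta> \<bullet> S (V t \<omega> / t) \<omega>)) \<partial>M) = \<infinity>"
        by (rule eventually_mono[OF eventually_gt_at_top[of "0::real"]]) (rule inf)
      then show ?thesis unfolding R using True by (simp add: tendsto_eventually)
    next
      case False
      define c where "c = ln (enn2real F)"
      have Kz: "K 0 = 0" by (simp add: K_def prob_space)
      have ev: "(\<integral>\<^sup>+\<omega>. ennreal (exp (\<theta> \<bullet> S (V t \<omega> / t) \<omega>)) \<partial>M) = ennreal (exp (t * K (c / t)))"
        if t: "t > max 0 (\<bar>c\<bar> / \<epsilon>)" for t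
      proof -
        have t0: "t > 0" using t by simp
        have "\<bar>c\<bar> / \<epsilon> < t" using t by simp
        then have ct: "\<bar>c / t\<bar> < \<epsilon>" using t0 eps by (simp add: field_simps abs_divide)
        have "(\<integral>\<^sup>+\<omega>. ennreal (exp (\<theta> \<bullet> S (V t \<omega> / t) \<omega>)) \<partial>M) =
            (\<integral>\<^sup>+\<omega>. ennreal (exp (c / t * V t \<omega>)) \<partial>M)"
          unfolding LHS[OF t0] using False by (intro nn_integral_cong) (simp add: c_def algebra_simps)
        also have "\<dots> = ennreal (exp (t * K (c / t)))"
          using mgfV[of t "c / t"] t0 GK[OF ct] by simp
        finally show ?thesis .
      qed
      have "((\<lambda>t. ennreal (exp (t * K (c / t)))) \<longlongrightarrow> ennreal (exp (c * D0))) at_top"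
        by (intro tendsto_intros lim_tK[OF dK Kz])
      then have "((\<lambda>t. \<integral>\<^sup>+\<omega>. ennreal (exp (\<theta> \<bullet> S (V t \<omega> / t) \<omega>)) \<partial>M) \<longlongrightarrow> ennreal (exp (c * D0))) at_top"
        by (rule Lim_transform_eventually)
           (rule eventually_mono[OF eventually_gt_at_top[of "max 0 (\<bar>c\<bar> / \<epsilon>)"]], rule ev[symmetric])
      then show ?thesis unfolding R using False DD0 by (simp add: c_def mult.commute)
    qed
  qed
qed

end
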